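(* Let $[X,d,m]$ be a metric random walk space with invariant and reversible measure $\nu$ under the standing assumptions below, and let $\Omega\subset X$ be a bounded $\nu$-measurable set with $0<\nu(\Omega)<\nu(X)$. Suppose $u_n\in BV_m(X)$, $n\in\mathbb{N}$, are $m$-least gradient functions in $\Omega$ and $u_n\to u$ in $L^1(X,\nu)$, where $u\in BV_m(X)$. Then $u$ is an $m$-least gradient function in $\Omega$.
   Context: A metric random walk space $[X,d,m]$ is a Polish metric space $(X,d)$ with a family $m=(m_x)_{x\in X}$ of Borel probability measures such that $x\mapsto m_x(A)$ is Borel measurable for every Borel $A$ and each $m_x$ has finite first moment. $\nu$ is invariant: $\nu(A)=\int_X m_x(A)\,d\nu(x)$ for all $\nu$-measurable $A$; reversible: $dm_x(y)\,d\nu(x)=dm_y(x)\,d\nu(y)$. Standing assumptions: $(X,d,\nu)$ is $\sigma$-finite, $\nu(X)<\infty$, $\nu$ ergodic (every Borel $B$ with $m_x(B)=1$ for all $x\in B$ has $\nu(B)\in\{0,\nu(X)\}$). $BV_m(X)$ is the set of $\nu$-measurable $u:X\to\mathbb{R}$ with $\int_X\int_X|u(y)-u(x)|\,dm_x(y)\,d\nu(x)<\infty$, and $TV_m(u):=\frac12\int_X\int_X|u(y)-u(x)|\,dm_x(y)\,d\nu(x)$. A function $u\in BV_m(X)$ is an $m$-least gradient function in $\Omega$ if $TV_m(u)\le TV_m(u+g)$ for every $g\in BV_m(X)$ with $g=0$ $\nu$-a.e. on $X\setminus\Omega$. *)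

theory Defs
  imports "HOL-Probability.Probability"
begin

text \<open>A metric random walk space [X,d,m] with invariant, reversible, ergodic,
  finite measure nu. X is the whole (Polish) type, d = dist.\<close>

definition mrw_space :: "('a::polish_space \<Rightarrow> 'a measure) \<Rightarrow> bool" where
  "mrw_space m \<longleftrightarrow>
     (\<forall>x. prob_space (m x) \<and> sets (m x) = sets borel) \<and>
     (\<forall>A \<in> sets borel. (\<lambda>x. emeasure (m x) A) \<in> borel_measurable borel) \<and>
     (\<forall>x. integrable (m x) (\<lambda>y. dist x y))"

definition invariant_measure :: "('a::polish_space \<Rightarrow> 'a measure) \<Rightarrow> 'a measure \<Rightarrow> bool" where
  "invariant_measure m \<nu> \<longleftrightarrow>
     (\<forall>A \<in> sets \<nu>. emeasure \<nu> A = (\<integral>\<^sup>+ x. emeasure (m x) A \<partial>\<nu>))"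

text \<open>Reversibility dm_x(y) d nu(x) = dm_y(x) d nu(y), as equality of measures on X x X,
  tested on measurable rectangles A x B.\<close>
definition reversible_measure :: "('a::polish_space \<Rightarrow> 'a measure) \<Rightarrow> 'a measure \<Rightarrow> bool" where
  "reversible_measure m \<nu> \<longleftrightarrow>
     (\<forall>A \<in> sets borel. \<forall>B \<in> sets borel.
        (\<integral>\<^sup>+ x. indicator A x * emeasure (m x) B \<partial>\<nu>) =
        (\<integral>\<^sup>+ x. indicator B x * emeasure (m x) A \<partial>\<nu>))"

definition ergodic_measure :: "('a::polish_space \<Rightarrow> 'a measure) \<Rightarrow> 'a measure \<Rightarrow> bool" where
  "ergodic_measure m \<nu> \<longleftrightarrow>
     (\<forall>B \<in> sets borel. (\<forall>x \<in> B. emeasure (m x) B = 1) \<longrightarrow>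
        emeasure \<nu> B = 0 \<or> emeasure \<nu> B = emeasure \<nu> (space \<nu>))"

definition TV_integral :: "('a \<Rightarrow> 'a measure) \<Rightarrow> 'a measure \<Rightarrow> ('a \<Rightarrow> real) \<Rightarrow> ennreal" where
  "TV_integral m \<nu> u = (\<integral>\<^sup>+ x. (\<integral>\<^sup>+ y. ennreal \<bar>u y - u x\<bar> \<partial>(m x)) \<partial>\<nu>)"

definition BV_m :: "('a \<Rightarrow> 'a measure) \<Rightarrow> 'a measure \<Rightarrow> ('a \<Rightarrow> real) set" where
  "BV_m m \<nu> = {u. u \<in> borel_measurable \<nu> \<and> TV_integral m \<nu> u < \<infinity>}"

definition TV_m :: "('a \<Rightarrow> 'a measure) \<Rightarrow> 'a measure \<Rightarrow> ('a \<Rightarrow> real) \<Rightarrow> real" where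
  "TV_m m \<nu> u = enn2real (TV_integral m \<nu> u) / 2"

definition least_gradient :: "('a \<Rightarrow> 'a measure) \<Rightarrow> 'a measure \<Rightarrow> 'a set \<Rightarrow> ('a \<Rightarrow> real) \<Rightarrow> bool" where
  "least_gradient m \<nu> \<Omega> u \<longleftrightarrow> u \<in> BV_m m \<nu> \<and>
     (\<forall>g \<in> BV_m m \<nu>. (AE x in \<nu>. x \<notin> \<Omega> \<longrightarrow> g x = 0) \<longrightarrow>
        TV_m m \<nu> u \<le> TV_m m \<nu> (\<lambda>x. u x + g x))"

end

theory Submission
  imports Defs
begin

lemma kernel_meas:
  assumes "mrw_space m" and sn: "sets \<nu> = sets (borel::'a::polish_space measure)"
  shows "m \<in> measurable \<nu> (subprob_algebra (borel::'a measure))"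
proof (rule measurable_subprob_algebra)
  fix a show "subprob_space (m a)" using assms(1) unfolding mrw_space_def
    by (simp add: prob_space_imp_subprob_space)
  show "sets (m a) = sets borel" using assms(1) unfolding mrw_space_def by simp
next
  fix A :: "'a set" assume "A \<in> sets borel"
  then have "(\<lambda>x. emeasure (m x) A) \<in> borel_measurable borel"
    using assms(1) unfolding mrw_space_def by simp
  then show "(\<lambda>x. emeasure (m x) A) \<in> borel_measurable \<nu>"
    by (subst measurable_cong_sets[OF sn refl]) simp
qed

lemma bind_eq:
  assumes "mrw_space m" and sn: "sets \<nu> = sets (borel::'a::polish_space measure)"
    and inv: "invariant_measure m \<nu>"
  shows "\<nu> \<bind> m = \<nu>"
proof -
  have K: "m \<in> measurable \<nu> (subprob_algebra borel)" using kernel_meas assms by blast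
  have ne: "space \<nu> \<noteq> {}" using sets_eq_imp_space_eq[OF sn] by simp
  have sb: "sets (\<nu> \<bind> m) = sets borel"
    using sets_bind[of \<nu> m borel] ne assms(1) unfolding mrw_space_def by simp
  show ?thesis
  proof (rule measure_eqI)
    show "sets (\<nu> \<bind> m) = sets \<nu>" using sb sn by simp
    fix A assume "A \<in> sets (\<nu> \<bind> m)"
    then have A: "A \<in> sets borel" using sb by simp
    show "emeasure (\<nu> \<bind> m) A = emeasure \<nu> A"
      using emeasure_bind[OF ne K A] inv A sn unfolding invariant_measure_def by simp
  qed
qed

lemma invariance_fun:
  assumes "mrw_space m" and sn: "sets \<nu> = sets (borel::'a::polish_space measure)"
    and inv: "invariant_measure m \<nu>"
    and f: "f \<in> borel_measurable (borel::'a measure)"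
  shows "(\<integral>\<^sup>+x. \<integral>\<^sup>+y. f y \<partial>m x \<partial>\<nu>) = (\<integral>\<^sup>+x. f x \<partial>\<nu>)"
proof -
  have K: "m \<in> measurable \<nu> (subprob_algebra borel)" using kernel_meas assms by blast
  have "(\<integral>\<^sup>+x. f x \<partial>(\<nu> \<bind> m)) = (\<integral>\<^sup>+x. \<integral>\<^sup>+y. f y \<partial>m x \<partial>\<nu>)"
    by (rule nn_integral_bind[OF f K])
  then show ?thesis using bind_eq[OF assms(1-3)] by simp
qed

lemma inner_meas:
  assumes "mrw_space m" and sn: "sets \<nu> = sets (borel::'a::polish_space measure)"
    and v: "v \<in> borel_measurable (borel::'a measure)"
  shows "(\<lambda>x. \<integral>\<^sup>+ y. ennreal \<bar>v y - v x\<bar> \<partial>(m x)) \<in> borel_measurable \<nu>"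
proof -
  have K: "m \<in> measurable \<nu> (subprob_algebra borel)" using kernel_meas assms by blast
  have "(\<lambda>(x, y). ennreal \<bar>v y - v x\<bar>) \<in> borel_measurable (\<nu> \<Otimes>\<^sub>M borel)"
  proof -
    have v': "v \<in> borel_measurable \<nu>" using v by (subst measurable_cong_sets[OF sn refl]) simp
    show ?thesis using v v' by measurable
  qed
  then show ?thesis using nn_integral_measurable_subprob_algebra2[OF _ K] by simp
qed



lemma TV_bound:
  assumes mrw: "mrw_space m" and sn: "sets \<nu> = sets (borel::'a::polish_space measure)"
    and inv: "invariant_measure m \<nu>"
    and f: "f \<in> borel_measurable (borel::'a measure)"
  shows "TV_integral m \<nu> f \<le> 2 * (\<integral>\<^sup>+x. ennreal \<bar>f x\<bar> \<partial>\<nu>)"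
proof -
  have K: "m \<in> measurable \<nu> (subprob_algebra borel)" using kernel_meas mrw sn by blast
  have inner: "(\<integral>\<^sup>+ y. ennreal \<bar>f y - f x\<bar> \<partial>(m x)) \<le> (\<integral>\<^sup>+ y. ennreal \<bar>f y\<bar> \<partial>(m x)) + ennreal \<bar>f x\<bar>" for x
  proof -
    have ps: "prob_space (m x)" and sx: "sets (m x) = sets borel" using mrw unfolding mrw_space_def by auto
    have fm: "f \<in> borel_measurable (m x)" using f by (subst measurable_cong_sets[OF sx refl]) simp
    have "(\<integral>\<^sup>+ y. ennreal \<bar>f y - f x\<bar> \<partial>(m x)) \<le> (\<integral>\<^sup>+ y. (ennreal \<bar>f y\<bar> + ennreal \<bar>f x\<bar>) \<partial>(m x))"
      by (intro nn_integral_mono) (simp add: ennreal_plus[symmetric] del: ennreal_plus)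
    also have "\<dots> = (\<integral>\<^sup>+ y. ennreal \<bar>f y\<bar> \<partial>(m x)) + (\<integral>\<^sup>+ y. ennreal \<bar>f x\<bar> \<partial>(m x))"
      using fm by (intro nn_integral_add) auto
    also have "(\<integral>\<^sup>+ y. ennreal \<bar>f x\<bar> \<partial>(m x)) = ennreal \<bar>f x\<bar>"
      using prob_space.emeasure_space_1[OF ps] by simp
    finally show ?thesis .
  qed
  have fn: "f \<in> borel_measurable \<nu>" using f by (subst measurable_cong_sets[OF sn refl]) simp
  have m1: "(\<lambda>x. \<integral>\<^sup>+ y. ennreal \<bar>f y\<bar> \<partial>(m x)) \<in> borel_measurable \<nu>"
    using nn_integral_measurable_subprob_algebra2[OF _ K, of "\<lambda>x y. ennreal \<bar>f y\<bar>"] f by measurable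
  have "TV_integral m \<nu> f \<le> (\<integral>\<^sup>+x. ((\<integral>\<^sup>+ y. ennreal \<bar>f y\<bar> \<partial>(m x)) + ennreal \<bar>f x\<bar>) \<partial>\<nu>)"
    unfolding TV_integral_def by (intro nn_integral_mono inner)
  also have "\<dots> = (\<integral>\<^sup>+x. \<integral>\<^sup>+ y. ennreal \<bar>f y\<bar> \<partial>(m x) \<partial>\<nu>) + (\<integral>\<^sup>+x. ennreal \<bar>f x\<bar> \<partial>\<nu>)"
    using m1 fn by (intro nn_integral_add) auto
  also have "(\<integral>\<^sup>+x. \<integral>\<^sup>+ y. ennreal \<bar>f y\<bar> \<partial>(m x) \<partial>\<nu>) = (\<integral>\<^sup>+x. ennreal \<bar>f x\<bar> \<partial>\<nu>)"
    using f by (intro invariance_fun[OF mrw sn inv]) auto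
  finally show ?thesis by (simp add: mult_2)
qed

lemma TV_tri:
  assumes mrw: "mrw_space m" and sn: "sets \<nu> = sets (borel::'a::polish_space measure)"
    and v: "v \<in> borel_measurable (borel::'a measure)"
    and w: "w \<in> borel_measurable (borel::'a measure)"
  shows "TV_integral m \<nu> v \<le> TV_integral m \<nu> w + TV_integral m \<nu> (\<lambda>x. v x - w x)"
proof -
  have inner: "(\<integral>\<^sup>+ y. ennreal \<bar>v y - v x\<bar> \<partial>(m x)) \<le> (\<integral>\<^sup>+ y. ennreal \<bar>w y - w x\<bar> \<partial>(m x)) + (\<integral>\<^sup>+ y. ennreal \<bar>(v y - w y) - (v x - w x)\<bar> \<partial>(m x))" for x
  proof -
    have sx: "sets (m x) = sets borel" using mrw unfolding mrw_space_def by auto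
    have vm: "v \<in> borel_measurable (m x)" using v by (subst measurable_cong_sets[OF sx refl]) simp
    have wm: "w \<in> borel_measurable (m x)" using w by (subst measurable_cong_sets[OF sx refl]) simp
    have "(\<integral>\<^sup>+ y. ennreal \<bar>v y - v x\<bar> \<partial>(m x)) \<le> (\<integral>\<^sup>+ y. (ennreal \<bar>w y - w x\<bar> + ennreal \<bar>(v y - w y) - (v x - w x)\<bar>) \<partial>(m x))"
      by (intro nn_integral_mono) (simp add: ennreal_plus[symmetric] del: ennreal_plus)
    also have "\<dots> = (\<integral>\<^sup>+ y. ennreal \<bar>w y - w x\<bar> \<partial>(m x)) + (\<integral>\<^sup>+ y. ennreal \<bar>(v y - w y) - (v x - w x)\<bar> \<partial>(m x))"
      using vm wm by (intro nn_integral_add) auto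
    finally show ?thesis .
  qed
  have vw: "(\<lambda>x. v x - w x) \<in> borel_measurable (borel::'a measure)" using v w by measurable
  have "TV_integral m \<nu> v \<le> (\<integral>\<^sup>+x. ((\<integral>\<^sup>+ y. ennreal \<bar>w y - w x\<bar> \<partial>(m x)) + (\<integral>\<^sup>+ y. ennreal \<bar>(v y - w y) - (v x - w x)\<bar> \<partial>(m x))) \<partial>\<nu>)"
    unfolding TV_integral_def by (intro nn_integral_mono inner)
  also have "\<dots> = TV_integral m \<nu> w + TV_integral m \<nu> (\<lambda>x. v x - w x)"
    unfolding TV_integral_def
    using inner_meas[OF mrw sn w] inner_meas[OF mrw sn vw] by (intro nn_integral_add) auto
  finally show ?thesis .
qed


theorem mainTheorem2:
  fixes m :: "'a::polish_space \<Rightarrow> 'a measure"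
    and \<nu> :: "'a measure"
    and \<Omega> :: "'a set"
    and un :: "nat \<Rightarrow> 'a \<Rightarrow> real"
    and u :: "'a \<Rightarrow> real"
  assumes "mrw_space m"
    and "sets \<nu> = sets borel"
    and "finite_measure \<nu>"
    and "invariant_measure m \<nu>"
    and "reversible_measure m \<nu>"
    and "ergodic_measure m \<nu>"
    and "bounded \<Omega>" and "\<Omega> \<in> sets \<nu>"
    and "0 < emeasure \<nu> \<Omega>" and "emeasure \<nu> \<Omega> < emeasure \<nu> (space \<nu>)"
    and "\<And>n. least_gradient m \<nu> \<Omega> (un n)"
    and "\<And>n. integrable \<nu> (un n)"
    and "integrable \<nu> u"
    and "(\<lambda>n. \<integral>\<^sup>+ x. ennreal \<bar>un n x - u x\<bar> \<partial>\<nu>) \<longlonglongrightarrow> 0"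
    and "u \<in> BV_m m \<nu>"
  shows "least_gradient m \<nu> \<Omega> u"
proof -
  note mrw = assms(1) and sn = assms(2) and inv = assms(4) and lg = assms(11)
    and conv = assms(14) and uBV = assms(15)
  define d where "d n = (\<integral>\<^sup>+ x. ennreal \<bar>un n x - u x\<bar> \<partial>\<nu>)" for n
  have bm: "f \<in> borel_measurable borel" if "f \<in> BV_m m \<nu>" for f
    using that unfolding BV_m_def by (auto simp: measurable_cong_sets[OF sn refl])
  have um: "u \<in> borel_measurable borel" using bm uBV .
  have unBV: "un n \<in> BV_m m \<nu>" for n using lg unfolding least_gradient_def by auto
  have unm: "un n \<in> borel_measurable borel" for n using bm unBV .
  have dist1: "TV_integral m \<nu> (\<lambda>x. un n x - u x) \<le> 2 * d n" for n
    unfolding d_def using unm um by (intro TV_bound[OF mrw sn inv]) measurable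
  have dist2: "TV_integral m \<nu> (\<lambda>x. u x - un n x) \<le> 2 * d n" for n
  proof -
    have "TV_integral m \<nu> (\<lambda>x. u x - un n x) \<le> 2 * (\<integral>\<^sup>+ x. ennreal \<bar>u x - un n x\<bar> \<partial>\<nu>)"
      using unm um by (intro TV_bound[OF mrw sn inv]) measurable
    also have "(\<integral>\<^sup>+ x. ennreal \<bar>u x - un n x\<bar> \<partial>\<nu>) = d n" unfolding d_def by (simp add: abs_minus_commute)
    finally show ?thesis .
  qed
  show ?thesis unfolding least_gradient_def
  proof (intro conjI ballI impI)
    show "u \<in> BV_m m \<nu>" by fact
    fix g assume gBV: "g \<in> BV_m m \<nu>" and gAE: "AE x in \<nu>. x \<notin> \<Omega> \<longrightarrow> g x = 0"
    have gm: "g \<in> borel_measurable borel" using bm gBV .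
    have fin_g: "TV_integral m \<nu> g < \<infinity>" using gBV unfolding BV_m_def by auto
    have fin_u: "TV_integral m \<nu> u < \<infinity>" using uBV unfolding BV_m_def by auto
    have fin_un: "TV_integral m \<nu> (un n) < \<infinity>" for n using unBV unfolding BV_m_def by auto
    have sum_fin: "TV_integral m \<nu> (\<lambda>x. v x + g x) < \<infinity>" if "v \<in> BV_m m \<nu>" for v
    proof -
      have vm: "v \<in> borel_measurable borel" using bm that .
      have "TV_integral m \<nu> (\<lambda>x. v x + g x) \<le> TV_integral m \<nu> v + TV_integral m \<nu> (\<lambda>x. (v x + g x) - v x)"
        using vm gm by (intro TV_tri[OF mrw sn]) measurable
      also have "(\<lambda>x. (v x + g x) - v x) = g" by auto
      finally have "TV_integral m \<nu> (\<lambda>x. v x + g x) \<le> TV_integral m \<nu> v + TV_integral m \<nu> g" .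
      moreover have "TV_integral m \<nu> v + TV_integral m \<nu> g < \<infinity>"
        using fin_g that unfolding BV_m_def by (simp add: ennreal_add_less_top)
      ultimately show ?thesis by (rule le_less_trans)
    qed
    have key: "TV_integral m \<nu> u \<le> TV_integral m \<nu> (\<lambda>x. u x + g x) + 4 * d n" for n
    proof -
      define A where "A = TV_integral m \<nu> u"
      define B where "B = TV_integral m \<nu> (un n)"
      define C where "C = TV_integral m \<nu> (\<lambda>x. un n x + g x)"
      define D where "D = TV_integral m \<nu> (\<lambda>x. u x + g x)"
      define E where "E = TV_integral m \<nu> (\<lambda>x. u x - un n x)"
      define F where "F = TV_integral m \<nu> (\<lambda>x. un n x - u x)"
      have 1: "A \<le> B + E" unfolding A_def B_def E_def
        by (rule TV_tri[OF mrw sn um unm])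
      have 2: "B \<le> C"
      proof -
        have "TV_m m \<nu> (un n) \<le> TV_m m \<nu> (\<lambda>x. un n x + g x)"
          using lg[of n] gBV gAE unfolding least_gradient_def by blast
        then have "enn2real B \<le> enn2real C"
          unfolding TV_m_def B_def C_def by simp
        then have X: "ennreal (enn2real B) \<le> ennreal (enn2real C)" by (rule ennreal_leI)
        have "B < \<infinity>" "C < \<infinity>" unfolding B_def C_def
          using fin_un[of n] sum_fin[OF unBV[of n]] by auto
        then have eB: "ennreal (enn2real B) = B" and eC: "ennreal (enn2real C) = C"
          by simp_all
        show ?thesis using X unfolding eB eC .
      qed
      have 3: "C \<le> D + F"
      proof -
        have "C \<le> D + TV_integral m \<nu> (\<lambda>x. (un n x + g x) - (u x + g x))"
          unfolding C_def D_def
          by (rule TV_tri[OF mrw sn borel_measurable_add[OF unm gm] borel_measurable_add[OF um gm]])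
        also have "(\<lambda>x. (un n x + g x) - (u x + g x)) = (\<lambda>x. un n x - u x)" by auto
        finally show ?thesis unfolding F_def .
      qed
      have 4: "E \<le> 2 * d n" unfolding E_def by (rule dist2)
      have 5: "F \<le> 2 * d n" unfolding F_def by (rule dist1)
      have "A \<le> D + 2 * d n + 2 * d n"
      proof -
        have "A \<le> B + E" by (rule 1)
        also have "\<dots> \<le> C + 2 * d n" by (rule add_mono[OF 2 4])
        also have "\<dots> \<le> (D + F) + 2 * d n" by (rule add_right_mono[OF 3])
        also have "\<dots> \<le> (D + 2 * d n) + 2 * d n" by (rule add_right_mono[OF add_left_mono[OF 5]])
        finally show ?thesis .
      qed
      also have "D + 2 * d n + 2 * d n = D + 4 * d n"
      proof -
        have "(2::ennreal) * d n + 2 * d n = (2 + 2) * d n" by (rule distrib_right[symmetric])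
        then show ?thesis by (simp add: add.assoc)
      qed
      finally show ?thesis unfolding A_def D_def .
    qed
    have conv': "d \<longlonglongrightarrow> 0" using conv unfolding d_def[abs_def] .
    have "(\<lambda>n. 4 * d n) \<longlonglongrightarrow> 4 * 0"
      by (rule ennreal_tendsto_cmult[OF _ conv']) simp
    then have "(\<lambda>n. TV_integral m \<nu> (\<lambda>x. u x + g x) + 4 * d n) \<longlonglongrightarrow> TV_integral m \<nu> (\<lambda>x. u x + g x) + 4 * 0"
      by (intro tendsto_add tendsto_const)
    then have lim: "(\<lambda>n. TV_integral m \<nu> (\<lambda>x. u x + g x) + 4 * d n) \<longlonglongrightarrow> TV_integral m \<nu> (\<lambda>x. u x + g x)"
      by simp
    have le: "TV_integral m \<nu> u \<le> TV_integral m \<nu> (\<lambda>x. u x + g x)"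
      by (rule LIMSEQ_le_const[OF lim]) (use key in blast)
    show "TV_m m \<nu> u \<le> TV_m m \<nu> (\<lambda>x. u x + g x)"
      unfolding TV_m_def using le sum_fin[OF uBV] fin_u
      by (simp add: divide_right_mono enn2real_mono)
  qed
qed

end
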